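(* Let $m,p,k,l,N$ be positive integers, $N_c:=2k(m+p)+l$, and assume $N>N_c$. Let $W_p\in\mathbb{R}^{k(m+p)\times N}$ be a (deterministic) matrix, $\bar L_p\in\mathbb{R}^{kp\times k(m+p)}$ a (deterministic) matrix, $q\in\{0,1\}$, and $\mathcal{C}\in\mathbb{R}^{N\times N_c}$ a random matrix with independent entries $(\mathcal{C})_{ij}\sim\mathcal{N}(0,1/N_c)$. Let $\bar W_p:=(W_pW_p^T)^qW_p\mathcal{C}$, $\zeta:=\bar L_pW_p\in\mathbb{R}^{kp\times N}$ and $\bar\zeta:=\bar L_p\bar W_p\in\mathbb{R}^{kp\times N_c}$. Then almost surely $\mathcal{R}(\bar\zeta)=\mathcal{R}(\zeta)$.
   Context: $\mathcal{R}(\cdot)$ denotes the range (column space). In the paper, $W_p=[U_p^T\ Y_p^T]^T$ is the stacked past input/output block Hankel data matrix, $\zeta$ is the oblique projection of future outputs onto past data along future inputs, which equals $\bar L_pW_p$, and its compressed counterpart is $\bar\zeta=\bar L_p\bar W_p$; $(W_pW_p^T)^0$ is the identity. *)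

theory Defs
  imports "HOL-Analysis.Analysis" "HOL-Probability.Probability"
begin

text \<open>Power of a square matrix; matpow A 0 is the identity.\<close>
fun matpow :: "real^'n^'n \<Rightarrow> nat \<Rightarrow> real^'n^'n" where
  "matpow A 0 = mat 1"
| "matpow A (Suc n) = A ** matpow A n"

text \<open>Range (column space) of a matrix.\<close>
definition col_range :: "real^'c^'r \<Rightarrow> (real^'r) set" where
  "col_range A = span (columns A)"

text \<open>Matrix built from an entry function (a sample of the random matrix).\<close>
definition mat_of_fun :: "('r \<times> 'c \<Rightarrow> real) \<Rightarrow> real^'c^'r" where
  "mat_of_fun f = (\<chi> i j. f (i, j))"

text \<open>Law of a random matrix with i.i.d. N(0, v) entries, on the entry functions.\<close>
definition gauss_matrix_measure :: "real \<Rightarrow> ('r::finite \<times> 'c::finite \<Rightarrow> real) measure" where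
  "gauss_matrix_measure v = PiM UNIV (\<lambda>_. density lborel (normal_density 0 (sqrt v)))"

end

theory Submission imports Defs "HOL-Computational_Algebra.Polynomial" begin

inductive polyin :: "'a set \<Rightarrow> (('a \<Rightarrow> real) \<Rightarrow> real) \<Rightarrow> bool" for V where
  pconst: "polyin V (\<lambda>x. c)"
| pvar: "i \<in> V \<Longrightarrow> polyin V (\<lambda>x. x i)"
| padd: "polyin V f \<Longrightarrow> polyin V g \<Longrightarrow> polyin V (\<lambda>x. f x + g x)"
| pmult: "polyin V f \<Longrightarrow> polyin V g \<Longrightarrow> polyin V (\<lambda>x. f x * g x)"

lemma polyin_dep: "polyin V f \<Longrightarrow> (\<forall>i\<in>V. x i = y i) \<Longrightarrow> f x = f y"
  by (induction rule: polyin.induct) auto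

lemma polyin_sum: "finite S \<Longrightarrow> (\<And>s. s \<in> S \<Longrightarrow> polyin V (f s)) \<Longrightarrow> polyin V (\<lambda>x. \<Sum>s\<in>S. f s x)"
  by (induction rule: finite_induct) (auto intro: polyin.intros)

lemma polyin_prod: "finite S \<Longrightarrow> (\<And>s. s \<in> S \<Longrightarrow> polyin V (f s)) \<Longrightarrow> polyin V (\<lambda>x. \<Prod>s\<in>S. f s x)"
  by (induction rule: finite_induct) (auto intro: polyin.intros)

lemma polyin_diff: "polyin V f \<Longrightarrow> polyin V g \<Longrightarrow> polyin V (\<lambda>x. f x - g x)"
proof -
  assume a: "polyin V f" "polyin V g"
  have "polyin V (\<lambda>x. f x + (-1) * g x)" by (intro polyin.intros a)
  then show ?thesis by simp
qed

lemma polyin_meas: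
  assumes "polyin V f" "V \<subseteq> I" "sets N = sets borel"
  shows "f \<in> borel_measurable (PiM I (\<lambda>_. N))"
  using assms(1)
proof (induction rule: polyin.induct)
  case (pvar i)
  then have "i \<in> I" using assms(2) by auto
  then have "(\<lambda>x. x i) \<in> measurable (PiM I (\<lambda>_. N)) N" by (rule measurable_component_singleton)
  then show ?case using measurable_cong_sets[OF refl assms(3)] by metis
next
  case (pconst c) show ?case by (rule borel_measurable_const)
next
  case (padd f g) show ?case using padd.IH by (rule borel_measurable_add)
next
  case (pmult f g) show ?case using pmult.IH by (rule borel_measurable_times)
qed

lemma polyin_decomp:
  assumes "polyin (insert i J) f"
  shows "\<exists>P. (\<forall>d. polyin J (\<lambda>x. coeff (P x) d)) \<and> (\<forall>x. f x = poly (P x) (x i))"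
  using assms
proof (induction rule: polyin.induct)
  case (pconst c)
  show ?case by (rule exI[of _ "\<lambda>x. [:c:]"]) (auto intro: polyin.intros)
next
  case (pvar j)
  show ?case
  proof (cases "j = i")
    case True
    show ?thesis by (rule exI[of _ "\<lambda>x. [:0,1:]"]) (auto simp: True intro: polyin.intros)
  next
    case False
    then have j: "j \<in> J" using pvar by auto
    have "polyin J (\<lambda>x. coeff [:x j:] d)" for d
    proof (cases d)
      case 0 then show ?thesis using j by (simp add: polyin.intros)
    next
      case (Suc n) then show ?thesis by (simp add: polyin.intros)
    qed
    then show ?thesis by (intro exI[of _ "\<lambda>x. [:x j:]"]) auto
  qed
next
  case (padd f g)
  then obtain P Q where "\<forall>d. polyin J (\<lambda>x. coeff (P x) d)" "\<forall>x. f x = poly (P x) (x i)"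
     "\<forall>d. polyin J (\<lambda>x. coeff (Q x) d)" "\<forall>x. g x = poly (Q x) (x i)" by blast
  then show ?case by (intro exI[of _ "\<lambda>x. P x + Q x"]) (auto intro: polyin.intros)
next
  case (pmult f g)
  then obtain P Q where PQ: "\<forall>d. polyin J (\<lambda>x. coeff (P x) d)" "\<forall>x. f x = poly (P x) (x i)"
     "\<forall>d. polyin J (\<lambda>x. coeff (Q x) d)" "\<forall>x. g x = poly (Q x) (x i)" by blast
  have "polyin J (\<lambda>x. coeff (P x * Q x) d)" for d
    unfolding coeff_mult using PQ(1,3) by (intro polyin_sum) (auto intro!: polyin.pmult)
  then show ?case using PQ by (intro exI[of _ "\<lambda>x. P x * Q x"]) auto
qed


lemma ae_polyin:
  fixes N :: "real measure"
  assumes sf: "sigma_finite_measure N" and sN: "sets N = sets borel"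
    and fin: "\<And>A. finite A \<Longrightarrow> emeasure N A = 0"
  shows "finite I \<Longrightarrow> polyin I f \<Longrightarrow> f x0 \<noteq> 0 \<Longrightarrow> AE x in PiM I (\<lambda>_. N). f x \<noteq> 0"
proof (induction I arbitrary: f rule: finite_induct)
  case empty
  then have "f x \<noteq> 0" for x using polyin_dep[of "{}" f x x0] by auto
  then show ?case by (intro AE_I2)
next
  case (insert i J)
  interpret product_sigma_finite "\<lambda>_. N" using sf by (simp add: product_sigma_finite_def)
  have spN: "space N = UNIV" using sets_eq_imp_space_eq[OF sN] by simp
  obtain P where P: "\<forall>d. polyin J (\<lambda>x. coeff (P x) d)" "\<forall>x. f x = poly (P x) (x i)"
    using polyin_decomp[OF insert.prems(1)] by blast
  have "P x0 \<noteq> 0" using P(2) insert.prems(2) by auto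
  then obtain d where d: "coeff (P x0) d \<noteq> 0" by (metis coeff_0 poly_eqI)
  have AEJ: "AE y in PiM J (\<lambda>_. N). coeff (P y) d \<noteq> 0"
    using insert.IH[of "\<lambda>x. coeff (P x) d"] P(1) d by blast
  let ?M = "PiM (insert i J) (\<lambda>_. N)"
  have fm: "f \<in> borel_measurable ?M" using polyin_meas[OF insert.prems(1) _ sN] by auto
  define Z where "Z = {x \<in> space ?M. f x = 0}"
  have "Z = f -` {0} \<inter> space ?M" unfolding Z_def by auto
  then have Zs: "Z \<in> sets ?M" using measurable_sets[OF fm, of "{0}"] by simp
  have "emeasure ?M Z = (\<integral>\<^sup>+x. indicator Z x \<partial>?M)" using Zs by simp
  also have "\<dots> = (\<integral>\<^sup>+y. (\<integral>\<^sup>+t. indicator Z (y(i:=t)) \<partial>N) \<partial>PiM J (\<lambda>_. N))"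
    by (rule product_nn_integral_insert[OF insert(1,2)]) (use Zs in simp)
  also have "\<dots> = (\<integral>\<^sup>+y. 0 \<partial>PiM J (\<lambda>_. N))"
  proof (rule nn_integral_cong_AE)
    show "AE y in PiM J (\<lambda>_. N). (\<integral>\<^sup>+t. indicator Z (y(i:=t)) \<partial>N) = 0"
      using AEJ AE_space
    proof eventually_elim
      case (elim y)
      have PE: "P (y(i:=t)) = P y" for t
      proof (rule poly_eqI)
        fix e
        show "coeff (P (y(i:=t))) e = coeff (P y) e"
          using polyin_dep[OF P(1)[rule_format, of e], of "y(i:=t)" y] insert(2) by auto
      qed
      have Py: "P y \<noteq> 0" using elim(1) by auto
      define R where "R = {t. poly (P y) t = 0}"
      have Rfin: "finite R" unfolding R_def using poly_roots_finite[OF Py] .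
      have sp: "y(i:=t) \<in> space ?M" for t
        using elim(2) by (auto simp: space_PiM PiE_iff spN extensional_def)
      have "indicator Z (y(i:=t)) = (indicator R t :: ennreal)" for t
        using sp[of t] P(2) PE[of t] unfolding Z_def R_def by (auto simp: indicator_def)
      then have "(\<integral>\<^sup>+t. indicator Z (y(i:=t)) \<partial>N) = (\<integral>\<^sup>+t. indicator R t \<partial>N)" by simp
      also have "\<dots> = emeasure N R"
        using Rfin by (intro nn_integral_indicator) (simp add: sN finite_imp_closed)
      also have "\<dots> = 0" using fin[OF Rfin] .
      finally show ?case .
    qed
  qed
  also have "\<dots> = 0" by simp
  finally have "emeasure ?M Z = 0" .
  then have "Z \<in> null_sets ?M" using Zs by auto
  then show ?case by (rule AE_I') (auto simp: Z_def)
qed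


declare transpose_matrix_vector[simp del]

lemma det_nz_ker: "det (A::real^'n^'n) \<noteq> 0 \<longleftrightarrow> (\<forall>x. A *v x = 0 \<longrightarrow> x = 0)"
  by (meson invertible_det_nz invertible_left_inverse matrix_left_invertible_ker)

lemma dot_mv: "(x::real^'m) \<bullet> (A *v y) = (transpose A *v x) \<bullet> y"
  by (simp add: dot_lmul_matrix transpose_matrix_vector)

lemma col_range_eq: "col_range (A::real^'c^'r) = range ((*v) A)"
proof
  show "col_range A \<subseteq> range ((*v) A)"
    unfolding col_range_def
  proof (rule span_minimal)
    show "columns A \<subseteq> range ((*v) A)" by (auto simp: columns_image_basis)
    show "subspace (range ((*v) A))"
      by (simp add: matrix_vector_mul_linear linear_subspace_image)
  qed
  show "range ((*v) A) \<subseteq> col_range A"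
    unfolding col_range_def using matrix_vector_mult_in_columnspace by blast
qed

lemma key_range:
  fixes M :: "real^'n^'o" and C :: "real^'c^'n"
  assumes inj: "\<forall>s \<in> range ((*v) (transpose M)). transpose C *v s = 0 \<longrightarrow> s = 0"
  shows "range ((*v) (M ** C)) = range ((*v) M)"
proof (rule subspace_dim_equal)
  show "subspace (range ((*v) (M ** C)))" by (simp add: matrix_vector_mul_linear linear_subspace_image)
  show "subspace (range ((*v) M))" by (simp add: matrix_vector_mul_linear linear_subspace_image)
  show "range ((*v) (M ** C)) \<subseteq> range ((*v) M)"
    by (auto simp: matrix_vector_mul_assoc[symmetric])
  let ?S = "range ((*v) (transpose M))"
  have sub: "subspace ?S" by (rule linear_subspace_image[OF matrix_vector_mul_linear subspace_UNIV])
  have injon: "inj_on ((*v) (transpose C)) (span ?S)"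
  proof (rule inj_onI)
    fix s s' assume s: "s \<in> span ?S" "s' \<in> span ?S" and e: "transpose C *v s = transpose C *v s'"
    have spS: "span ?S = ?S" using sub span_eq_iff by blast
    have "s - s' \<in> ?S" using s sub spS by (metis subspace_diff)
    moreover have "transpose C *v (s - s') = 0" using e by (simp add: matrix_vector_mult_diff_distrib)
    ultimately show "s = s'" using inj by auto
  qed
  have "dim (range ((*v) M)) = rank M" by (simp add: rank_dim_range)
  also have "\<dots> = rank (transpose M)" by (simp add: rank_transpose)
  also have "\<dots> = dim ?S" by (simp add: rank_dim_range)
  also have "\<dots> = dim ((*v) (transpose C) ` ?S)"
    using dim_image_eq[OF _ injon] by (simp add: matrix_vector_mul_linear)
  also have "(*v) (transpose C) ` ?S = range ((*v) (transpose C ** transpose M))"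
    by (simp only: image_image matrix_vector_mul_assoc)
  also have "dim \<dots> = rank (transpose (M ** C))"
    by (simp add: rank_dim_range matrix_transpose_mul)
  also have "\<dots> = dim (range ((*v) (M ** C)))" by (metis rank_transpose rank_dim_range)
  finally show "dim (range ((*v) M)) \<le> dim (range ((*v) (M ** C)))" by simp
qed


definition Kmat :: "real^'n^'n \<Rightarrow> real^'c^'n \<Rightarrow> real^'n^'n" where
  "Kmat P C = P ** C ** transpose C ** P + (mat 1 - P)"

lemma Kmat_mv: "Kmat P C *v x = P *v (C *v (transpose C *v (P *v x))) + (x - P *v x)"
  unfolding Kmat_def
  by (simp add: matrix_vector_mult_add_rdistrib matrix_vector_mult_diff_rdistrib matrix_vector_mul_assoc matrix_mul_assoc)

lemma Kmat_det:
  fixes P :: "real^'n^'n" and C :: "real^'c^'n" and S :: "(real^'n) set"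
  assumes sym: "transpose P = P" and inS: "\<And>x. P *v x \<in> S" and fx: "\<And>s. s \<in> S \<Longrightarrow> P *v s = s"
  shows "det (Kmat P C) \<noteq> 0 \<longleftrightarrow> (\<forall>s\<in>S. transpose C *v s = 0 \<longrightarrow> s = 0)"
proof
  assume d: "det (Kmat P C) \<noteq> 0"
  show "\<forall>s\<in>S. transpose C *v s = 0 \<longrightarrow> s = 0"
  proof (intro ballI impI)
    fix s assume s: "s \<in> S" "transpose C *v s = 0"
    have "Kmat P C *v s = 0" using s fx[OF s(1)] by (simp add: Kmat_mv)
    then show "s = 0" using d det_nz_ker by blast
  qed
next
  assume inj: "\<forall>s\<in>S. transpose C *v s = 0 \<longrightarrow> s = 0"
  have "Kmat P C *v x = 0 \<longrightarrow> x = 0" for x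
  proof
    assume k: "Kmat P C *v x = 0"
    define u where "u = P *v x"
    have uS: "u \<in> S" unfolding u_def by (rule inS)
    have Pu: "P *v u = u" using fx[OF uS] .
    define w where "w = transpose C *v u"
    have "0 = x \<bullet> (Kmat P C *v x)" using k by simp
    also have "\<dots> = x \<bullet> (P *v (C *v w)) + x \<bullet> (x - u)"
      by (simp add: Kmat_mv u_def w_def inner_add_right)
    also have "x \<bullet> (P *v (C *v w)) = w \<bullet> w"
      by (simp add: dot_mv sym u_def w_def)
    also have "x \<bullet> (x - u) = (x - u) \<bullet> (x - u)"
    proof -
      have "u \<bullet> u = x \<bullet> u"
      proof -
        have "x \<bullet> u = x \<bullet> (P *v u)" using Pu by simp
        also have "\<dots> = u \<bullet> u" by (simp add: dot_mv sym u_def)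
        finally show ?thesis by simp
      qed
      then show ?thesis by (simp add: inner_diff_left inner_diff_right inner_commute)
    qed
    finally have "w \<bullet> w + (x - u) \<bullet> (x - u) = 0" by simp
    then have "w \<bullet> w = 0" "(x - u) \<bullet> (x - u) = 0"
      by (smt (verit) inner_ge_zero)+
    then have "w = 0" "x = u" by auto
    then show "x = 0" using inj uS unfolding w_def by auto
  qed
  then show "det (Kmat P C) \<noteq> 0" using det_nz_ker by blast
qed


lemma projector_exists:
  fixes S :: "(real^'n) set" assumes "subspace S"
  obtains P :: "real^'n^'n" where "transpose P = P" "\<And>x. P *v x \<in> S" "\<And>s. s \<in> S \<Longrightarrow> P *v s = s"
proof -
  obtain B where B: "B \<subseteq> S" "pairwise orthogonal B" "\<And>x. x \<in> B \<Longrightarrow> norm x = 1"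
    "independent B" "card B = dim S" "span B = S"
    using orthonormal_basis_subspace[OF assms] by blast
  have finB: "finite B" using B(4) independent_bound by blast
  define P :: "real^'n^'n" where "P = (\<chi> i j. \<Sum>b\<in>B. b$i * b$j)"
  have Pv: "P *v x = (\<Sum>b\<in>B. (b \<bullet> x) *\<^sub>R b)" for x
  proof -
    have "(P *v x)$i = (\<Sum>b\<in>B. (b \<bullet> x) *\<^sub>R b)$i" for i
    proof -
      have "(P *v x)$i = (\<Sum>j\<in>UNIV. \<Sum>b\<in>B. b$i*b$j*x$j)"
        by (simp add: P_def matrix_vector_mult_def sum_distrib_right)
      also have "\<dots> = (\<Sum>b\<in>B. \<Sum>j\<in>UNIV. b$i*b$j*x$j)" by (rule sum.swap)
      also have "\<dots> = (\<Sum>b\<in>B. (b \<bullet> x) *\<^sub>R b)$i"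
        by (simp add: inner_vec_def sum_distrib_left sum_distrib_right mult_ac)
      finally show ?thesis .
    qed
    then show ?thesis by (simp add: vec_eq_iff)
  qed
  show ?thesis
  proof
    show "transpose P = P" by (simp add: P_def transpose_def vec_eq_iff mult.commute)
    show "P *v x \<in> S" for x
      unfolding Pv B(6)[symmetric] by (intro span_sum span_scale span_base)
    have fixB: "P *v b = b" if b: "b \<in> B" for b
    proof -
      have "P *v b = (b \<bullet> b) *\<^sub>R b + (\<Sum>b'\<in>B - {b}. (b' \<bullet> b) *\<^sub>R b')"
        unfolding Pv using finB b by (simp add: sum.remove)
      also have "(\<Sum>b'\<in>B - {b}. (b' \<bullet> b) *\<^sub>R b') = 0"
        using B(2) b by (intro sum.neutral) (auto simp: pairwise_def orthogonal_def)
      also have "b \<bullet> b = 1" using B(3)[OF b] by (simp add: norm_eq_1)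
      finally show ?thesis by simp
    qed
    show "P *v s = s" if "s \<in> S" for s
      using linear_eq_on_span[OF matrix_vector_mul_linear linear_id, of B P s] fixB that B(6)
      by (simp add: id_def)
  qed
qed

lemma exists_inj_C:
  fixes S :: "(real^'n) set" assumes "subspace S" "dim S \<le> CARD('c::finite)"
  shows "\<exists>c0 :: 'n \<times> 'c \<Rightarrow> real. \<forall>s\<in>S. transpose (mat_of_fun c0) *v s = 0 \<longrightarrow> s = 0"
proof -
  obtain B where B: "B \<subseteq> S" "pairwise orthogonal B" "\<And>x. x \<in> B \<Longrightarrow> norm x = 1"
    "independent B" "card B = dim S" "span B = S"
    using orthonormal_basis_subspace[OF assms(1)] by blast
  have finB: "finite B" using B(4) independent_bound by blast
  obtain \<sigma> :: "real^'n \<Rightarrow> 'c" where \<sigma>: "inj_on \<sigma> B"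
    using card_le_inj[OF finB finite, of "UNIV :: 'c set"] B(5) assms(2) by auto
  define c0 :: "'n \<times> 'c \<Rightarrow> real" where "c0 = (\<lambda>(r,c). \<Sum>b\<in>B. if \<sigma> b = c then b$r else 0)"
  have comp: "(transpose (mat_of_fun c0) *v s) $ (\<sigma> b) = b \<bullet> s" if b: "b \<in> B" for b s
  proof -
    have e: "(\<Sum>b'\<in>B. if \<sigma> b' = \<sigma> b then b'$r else 0) = b$r" for r
    proof -
      have "(\<Sum>b'\<in>B. if \<sigma> b' = \<sigma> b then b'$r else 0) = (\<Sum>b'\<in>B. if b' = b then b'$r else 0)"
        using \<sigma> b by (intro sum.cong) (auto simp: inj_on_def)
      also have "\<dots> = b$r" using finB b by simp
      finally show ?thesis .
    qed
    show ?thesis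
      by (simp add: matrix_vector_mult_def transpose_def mat_of_fun_def c0_def e inner_vec_def)
  qed
  have "\<forall>s\<in>S. transpose (mat_of_fun c0) *v s = 0 \<longrightarrow> s = 0"
  proof (intro ballI impI)
    fix s assume s: "s \<in> S" "transpose (mat_of_fun c0) *v s = 0"
    have "orthogonal s b" if "b \<in> B" for b
      using comp[OF that, of s] s(2) by (simp add: orthogonal_def inner_commute)
    then have "orthogonal s s" using orthogonal_to_span[of s B s] s(1) B(6) by auto
    then show "s = 0" by (simp add: orthogonal_def)
  qed
  then show ?thesis by blast
qed

lemma q_range:
  fixes W :: "real^'n^'r" and L :: "real^'r^'o"
  assumes "q \<in> {0, 1}"
  shows "range ((*v) (L ** (matpow (W ** transpose W) q ** W))) = range ((*v) (L ** W))"
proof -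
  have img: "range ((*v) (L ** X)) = (*v) L ` range ((*v) X)" for X :: "real^'n^'r"
    by (simp only: image_image matrix_vector_mul_assoc)
  have "range ((*v) (matpow (W ** transpose W) q ** W)) = range ((*v) W)"
  proof (cases "q = 0")
    case True then show ?thesis by simp
  next
    case False
    then have q: "q = 1" using assms by auto
    have eq: "matpow (W ** transpose W) q ** W = W ** (transpose W ** W)"
      by (simp add: q matrix_mul_assoc)
    have "range ((*v) (W ** (transpose W ** W))) = range ((*v) W)"
    proof (rule key_range, intro ballI impI)
      fix s assume s: "s \<in> range ((*v) (transpose W))"
        and z: "transpose (transpose W ** W) *v s = 0"
      obtain y where y: "s = transpose W *v y" using s by auto
      define t where "t = W *v s"
      have "transpose W *v t = 0" using z by (simp add: matrix_transpose_mul t_def matrix_vector_mul_assoc)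
      then have "t \<bullet> t = 0" using dot_mv[of t W s] by (simp add: t_def)
      then have t0: "W *v s = 0" by (simp add: t_def)
      have "s \<bullet> s = y \<bullet> (W *v s)" using dot_mv[of y W s] y by simp
      then show "s = 0" using t0 by simp
    qed
    then show ?thesis using eq by simp
  qed
  then show ?thesis by (simp only: img)
qed


definition mpolyin :: "'a set \<Rightarrow> (('a \<Rightarrow> real) \<Rightarrow> real^'m^'k) \<Rightarrow> bool" where
  "mpolyin V A \<longleftrightarrow> (\<forall>i j. polyin V (\<lambda>x. A x $ i $ j))"

lemma mp_const: "mpolyin V (\<lambda>x. B)"
  unfolding mpolyin_def by (simp add: polyin.pconst)

lemma mp_var: "mpolyin UNIV (\<lambda>x. mat_of_fun x)"
  unfolding mpolyin_def mat_of_fun_def by (simp add: polyin.pvar)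

lemma mp_transpose: "mpolyin V A \<Longrightarrow> mpolyin V (\<lambda>x. transpose (A x))"
  unfolding mpolyin_def by (simp add: transpose_def)

lemma mp_mul: "mpolyin V A \<Longrightarrow> mpolyin V B \<Longrightarrow> mpolyin V (\<lambda>x. A x ** B x)"
  unfolding mpolyin_def matrix_matrix_mult_def
  by (simp add: polyin_sum polyin.pmult)

lemma mp_add: "mpolyin V A \<Longrightarrow> mpolyin V B \<Longrightarrow> mpolyin V (\<lambda>x. A x + B x)"
  unfolding mpolyin_def by (simp add: polyin.padd)

lemma mp_diff: "mpolyin V A \<Longrightarrow> mpolyin V B \<Longrightarrow> mpolyin V (\<lambda>x. A x - B x)"
  unfolding mpolyin_def by (simp add: polyin_diff)

lemma mp_det: "mpolyin V (A :: ('a \<Rightarrow> real) \<Rightarrow> real^'n^'n) \<Longrightarrow> polyin V (\<lambda>x. det (A x))"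
  unfolding mpolyin_def det_def
  by (intro polyin_sum polyin.pmult polyin.pconst polyin_prod) (auto simp: finite_permutations)

lemma ae_inj:
  fixes S :: "(real^'n) set"
  assumes "subspace S" "dim S \<le> CARD('c::finite)" "v > 0"
  shows "AE C in (gauss_matrix_measure v :: ('n \<times> 'c \<Rightarrow> real) measure).
           \<forall>s\<in>S. transpose (mat_of_fun C) *v s = 0 \<longrightarrow> s = 0"
proof -
  obtain P :: "real^'n^'n" where P: "transpose P = P" "\<And>x. P *v x \<in> S" "\<And>s. s \<in> S \<Longrightarrow> P *v s = s"
    using projector_exists[OF assms(1)] by blast
  obtain c0 :: "'n \<times> 'c \<Rightarrow> real" where c0: "\<forall>s\<in>S. transpose (mat_of_fun c0) *v s = 0 \<longrightarrow> s = 0"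
    using exists_inj_C[OF assms(1,2)] by blast
  define N where "N = density lborel (normal_density 0 (sqrt v))"
  have ps: "prob_space N" unfolding N_def using assms(3) by (simp add: prob_space_normal_density)
  then have sf: "sigma_finite_measure N"
    by (simp add: prob_space_imp_sigma_finite)
  have sN: "sets N = sets borel" by (simp add: N_def)
  have fin: "emeasure N A = 0" if "finite A" for A
  proof -
    have A0: "A \<in> null_sets lborel" using that by (rule finite_imp_null_set_lborel)
    have "A \<in> null_sets N" unfolding N_def
      using A0 AE_not_in[OF A0] by (subst null_sets_density_iff) (auto elim: AE_mp)
    then show ?thesis by auto
  qed
  define f where "f = (\<lambda>C :: 'n \<times> 'c \<Rightarrow> real. det (Kmat P (mat_of_fun C)))"
  have pf: "polyin UNIV f"
    unfolding f_def Kmat_def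
    by (intro mp_det mp_add mp_diff mp_mul mp_transpose mp_var mp_const)
  have "f c0 \<noteq> 0" unfolding f_def using Kmat_det[OF P] c0 by blast
  then have "AE C in PiM UNIV (\<lambda>_. N). f C \<noteq> 0"
    using ae_polyin[OF sf sN fin, of UNIV f c0] pf by simp
  then have "AE C in (gauss_matrix_measure v :: ('n \<times> 'c \<Rightarrow> real) measure). f C \<noteq> 0"
    unfolding gauss_matrix_measure_def N_def .
  then show ?thesis
    by (rule eventually_mono) (use Kmat_det[OF P] in \<open>auto simp: f_def\<close>)
qed

theorem lemma7:
  fixes m p k l N :: nat
    and Wp :: "real^'n^'r"
    and Lp :: "real^'r^'o"
    and q :: nat
  assumes "m > 0" "p > 0" "k > 0" "l > 0" "N > 0"
    and "CARD('r) = k * (m + p)"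
    and "CARD('o) = k * p"
    and "CARD('n) = N"
    and "CARD('c) = 2 * k * (m + p) + l"
    and "N > 2 * k * (m + p) + l"
    and "q \<in> {0, 1}"
  shows "AE C in (gauss_matrix_measure (1 / real (2 * k * (m + p) + l)) :: ('n \<times> 'c::finite \<Rightarrow> real) measure).
           col_range (Lp ** (matpow (Wp ** transpose Wp) q ** Wp ** mat_of_fun C))
           = col_range (Lp ** Wp)"
proof -
  define M0 where "M0 = Lp ** (matpow (Wp ** transpose Wp) q ** Wp)"
  define S where "S = range ((*v) (transpose M0))"
  have sub: "subspace S" unfolding S_def
    by (rule linear_subspace_image[OF matrix_vector_mul_linear subspace_UNIV])
  have "dim S = rank (transpose M0)" unfolding S_def by (simp add: rank_dim_range)
  also have "\<dots> \<le> CARD('o)" using rank_bound[of "transpose M0"] by simp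
  also have "\<dots> \<le> CARD('c)"
  proof -
    have "k * p \<le> k * (m + p)" by simp
    moreover have "2 * k * (m + p) = 2 * (k * (m + p))" by simp
    ultimately show ?thesis using assms(7,9) by linarith
  qed
  finally have dS: "dim S \<le> CARD('c)" .
  have "(0::nat) < 2 * k * (m + p) + l" using assms(4) by simp
  then have v: "1 / real (2 * k * (m + p) + l) > 0" by (simp only: of_nat_0_less_iff divide_pos_pos zero_less_one)
  show ?thesis
    using ae_inj[OF sub dS v]
  proof (rule eventually_mono)
    fix C :: "'n \<times> 'c \<Rightarrow> real"
    assume inj: "\<forall>s\<in>S. transpose (mat_of_fun C) *v s = 0 \<longrightarrow> s = 0"
    have "Lp ** (matpow (Wp ** transpose Wp) q ** Wp ** mat_of_fun C) = M0 ** mat_of_fun C"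
      unfolding M0_def by (simp add: matrix_mul_assoc)
    then have "col_range (Lp ** (matpow (Wp ** transpose Wp) q ** Wp ** mat_of_fun C))
        = range ((*v) (M0 ** mat_of_fun C))" by (simp add: col_range_eq)
    also have "\<dots> = range ((*v) M0)" using inj unfolding S_def by (rule key_range)
    also have "\<dots> = range ((*v) (Lp ** Wp))" unfolding M0_def using assms(11) by (rule q_range)
    also have "\<dots> = col_range (Lp ** Wp)" by (simp add: col_range_eq)
    finally show "col_range (Lp ** (matpow (Wp ** transpose Wp) q ** Wp ** mat_of_fun C))
           = col_range (Lp ** Wp)" .
  qed
qed

end
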